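(* Let $n\geq 2$ be an integer, $N$ a finite von Neumann algebra with normal faithful tracial state $\tau_N$, and $a=(a_{ij})_{1\leq i,j\leq n}\in M_n(N)$. Define the completely positive map $T_a$ on $M_n(\mathbb{C})$ by $T_a(x)=(\mathrm{id}_n\otimes\tau_N)(a(x\otimes1_N)a^* )$. Then $$F(T_a)=\tfrac14\|a+a^t\|_2^2\,W_n^+ + \tfrac14\|a-a^t\|_2^2\,W_n^-,$$ where $a^t=(a_{ji})_{1\leq i,j\leq n}\in M_n(N)$.
   Context: $M_n(N)=M_n(\mathbb{C})\otimes N$ and $\|x\|_2=((\tau_n\otimes\tau_N)(x^*x))^{1/2}$ with $\tau_n$ the normalized trace on $M_n(\mathbb{C})$. For $u\in\mathcal{U}(n)$ and a linear map $T$ on $M_n(\mathbb{C})$, $\rho_u(T)=\mathrm{ad}(u)\,T\,\mathrm{ad}(u^t)$ with $\mathrm{ad}(v)(x)=vxv^*$ and $u^t$ the transpose; the twirling map is $F(T)=\int_{\mathcal{U}(n)}\rho_u(T)\,du$ (Haar probability measure). The Holevo–Werner channels are $W_n^+(x)=\frac{1}{n+1}(\mathrm{Tr}_n(x)1_n+x^t)$, $W_n^-(x)=\frac{1}{n-1}(\mathrm{Tr}_n(x)1_n-x^t)$, $\mathrm{Tr}_n$ the non-normalized trace. *)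

theory Defs
  imports "HOL-Probability.Probability"
begin

text \<open>Abstract tracial *-algebra (N, tau_N): a unital complex *-algebra, given by a
ring_1 type 'b together with a complex scalar action sc, an involution st and a
faithful positive tracial state tau.  (A finite von Neumann algebra with normal
faithful tracial state is an instance.)\<close>

definition tracial_star_alg ::
  "(complex \<Rightarrow> 'b::ring_1 \<Rightarrow> 'b) \<Rightarrow> ('b \<Rightarrow> 'b) \<Rightarrow> ('b \<Rightarrow> complex) \<Rightarrow> bool" where
  "tracial_star_alg sc st tau \<longleftrightarrow>
     (\<forall>c x y. sc c (x + y) = sc c x + sc c y) \<and>
     (\<forall>c d x. sc (c + d) x = sc c x + sc d x) \<and>
     (\<forall>c d x. sc (c * d) x = sc c (sc d x)) \<and>
     (\<forall>x. sc 1 x = x) \<and>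
     (\<forall>c x y. sc c (x * y) = sc c x * y \<and> sc c (x * y) = x * sc c y) \<and>
     (\<forall>x. st (st x) = x) \<and>
     (\<forall>x y. st (x + y) = st x + st y) \<and>
     (\<forall>x y. st (x * y) = st y * st x) \<and>
     (\<forall>c x. st (sc c x) = sc (cnj c) (st x)) \<and>
     (\<forall>x y. tau (x + y) = tau x + tau y) \<and>
     (\<forall>c x. tau (sc c x) = c * tau x) \<and>
     tau 1 = 1 \<and>
     (\<forall>x y. tau (x * y) = tau (y * x)) \<and>
     (\<forall>x. tau (st x * x) \<in> \<real> \<and> Re (tau (st x * x)) \<ge> 0) \<and>
     (\<forall>x. tau (st x * x) = 0 \<longrightarrow> x = 0)"

definition cadj :: "complex^'n^'n \<Rightarrow> complex^'n^'n" where
  "cadj u = (\<chi> i j. cnj (u $ j $ i))"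

definition unitaries :: "(complex^'n^'n) set" where
  "unitaries = {u. u ** cadj u = mat 1}"

text \<open>Haar probability measure on U(n): a left-invariant Borel probability measure
(unique by uniqueness of Haar measure on the compact group U(n)).\<close>
definition haar_unitary :: "(complex^'n^'n) measure \<Rightarrow> bool" where
  "haar_unitary \<mu> \<longleftrightarrow>
     prob_space \<mu> \<and> space \<mu> = unitaries \<and>
     sets \<mu> = sets (restrict_space borel unitaries) \<and>
     (\<forall>v\<in>unitaries. distr \<mu> \<mu> (\<lambda>u. v ** u) = \<mu>)"

definition ad :: "complex^'n^'n \<Rightarrow> complex^'n^'n \<Rightarrow> complex^'n^'n" where
  "ad v x = v ** x ** cadj v"

definition rho ::
  "complex^'n^'n \<Rightarrow> (complex^'n^'n \<Rightarrow> complex^'n^'n) \<Rightarrow> complex^'n^'n \<Rightarrow> complex^'n^'n" where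
  "rho u T = ad u \<circ> T \<circ> ad (transpose u)"

definition twirl ::
  "(complex^'n^'n) measure \<Rightarrow> (complex^'n^'n \<Rightarrow> complex^'n^'n) \<Rightarrow> complex^'n^'n \<Rightarrow> complex^'n^'n" where
  "twirl \<mu> T x = integral\<^sup>L \<mu> (\<lambda>u. rho u T x)"

definition W_plus :: "complex^'n^'n \<Rightarrow> complex^'n^'n" where
  "W_plus x = (1 / (of_nat CARD('n) + 1)) *\<^sub>R (mat (trace x) + transpose x)"

definition W_minus :: "complex^'n^'n \<Rightarrow> complex^'n^'n" where
  "W_minus x = (1 / (of_nat CARD('n) - 1)) *\<^sub>R (mat (trace x) - transpose x)"

definition madj :: "('b::ring_1 \<Rightarrow> 'b) \<Rightarrow> 'b^'n^'n \<Rightarrow> 'b^'n^'n" where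
  "madj st a = (\<chi> i j. st (a $ j $ i))"

definition tens1 :: "(complex \<Rightarrow> 'b::ring_1 \<Rightarrow> 'b) \<Rightarrow> complex^'n^'n \<Rightarrow> 'b^'n^'n" where
  "tens1 sc x = (\<chi> i j. sc (x $ i $ j) 1)"

definition Tmap ::
  "(complex \<Rightarrow> 'b::ring_1 \<Rightarrow> 'b) \<Rightarrow> ('b \<Rightarrow> 'b) \<Rightarrow> ('b \<Rightarrow> complex) \<Rightarrow> 'b^'n^'n
     \<Rightarrow> complex^'n^'n \<Rightarrow> complex^'n^'n" where
  "Tmap sc st tau a x = (\<chi> i j. tau ((a ** tens1 sc x ** madj st a) $ i $ j))"

definition norm2_sq ::
  "('b::ring_1 \<Rightarrow> 'b) \<Rightarrow> ('b \<Rightarrow> complex) \<Rightarrow> 'b^'n^'n \<Rightarrow> real" where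
  "norm2_sq st tau x = Re ((\<Sum>i\<in>UNIV. tau ((madj st x ** x) $ i $ i)) / of_nat CARD('n))"

end

theory Submission
  imports Defs
begin

definition M1 :: "complex^'n^'n \<Rightarrow> ('n\<Rightarrow>'n\<Rightarrow>'n\<Rightarrow>'n\<Rightarrow>complex) \<Rightarrow> ('n\<Rightarrow>'n\<Rightarrow>'n\<Rightarrow>'n\<Rightarrow>complex)" where
  "M1 v K = (\<lambda>i j p q. \<Sum>a\<in>UNIV. v$i$a * K a j p q)"
definition M2 :: "complex^'n^'n \<Rightarrow> ('n\<Rightarrow>'n\<Rightarrow>'n\<Rightarrow>'n\<Rightarrow>complex) \<Rightarrow> ('n\<Rightarrow>'n\<Rightarrow>'n\<Rightarrow>'n\<Rightarrow>complex)" where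
  "M2 v K = (\<lambda>i j p q. \<Sum>b\<in>UNIV. cnj (v$j$b) * K i b p q)"
definition M3 :: "complex^'n^'n \<Rightarrow> ('n\<Rightarrow>'n\<Rightarrow>'n\<Rightarrow>'n\<Rightarrow>complex) \<Rightarrow> ('n\<Rightarrow>'n\<Rightarrow>'n\<Rightarrow>'n\<Rightarrow>complex)" where
  "M3 v K = (\<lambda>i j p q. \<Sum>c\<in>UNIV. v$p$c * K i j c q)"
definition M4 :: "complex^'n^'n \<Rightarrow> ('n\<Rightarrow>'n\<Rightarrow>'n\<Rightarrow>'n\<Rightarrow>complex) \<Rightarrow> ('n\<Rightarrow>'n\<Rightarrow>'n\<Rightarrow>'n\<Rightarrow>complex)" where
  "M4 v K = (\<lambda>i j p q. \<Sum>d\<in>UNIV. cnj (v$q$d) * K i j p d)"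

definition act where "act v K = M1 v (M2 v (M3 v (M4 v K)))"

lemma M1_comp: "M1 v (M1 u K) = M1 (v ** u) K"
  unfolding M1_def matrix_matrix_mult_def
  by (auto simp: sum_distrib_left sum_distrib_right mult.assoc intro!: ext sum.swap[THEN trans])

lemma M2_comp: "M2 v (M2 u K) = M2 (v ** u) K"
  unfolding M2_def matrix_matrix_mult_def
  by (auto simp: sum_distrib_left sum_distrib_right mult.assoc cnj_sum intro!: ext sum.swap[THEN trans])
lemma M3_comp: "M3 v (M3 u K) = M3 (v ** u) K"
  unfolding M3_def matrix_matrix_mult_def
  by (auto simp: sum_distrib_left sum_distrib_right mult.assoc intro!: ext sum.swap[THEN trans])
lemma M4_comp: "M4 v (M4 u K) = M4 (v ** u) K"
  unfolding M4_def matrix_matrix_mult_def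
  by (auto simp: sum_distrib_left sum_distrib_right mult.assoc cnj_sum intro!: ext sum.swap[THEN trans])

lemma M12: "M1 v (M2 u K) = M2 u (M1 v K)"
  unfolding M1_def M2_def by (auto simp: sum_distrib_left mult.left_commute intro!: ext sum.swap[THEN trans])
lemma M13: "M1 v (M3 u K) = M3 u (M1 v K)"
  unfolding M1_def M3_def by (auto simp: sum_distrib_left mult.left_commute intro!: ext sum.swap[THEN trans])
lemma M14: "M1 v (M4 u K) = M4 u (M1 v K)"
  unfolding M1_def M4_def by (auto simp: sum_distrib_left mult.left_commute intro!: ext sum.swap[THEN trans])
lemma M23: "M2 v (M3 u K) = M3 u (M2 v K)"
  unfolding M2_def M3_def by (auto simp: sum_distrib_left mult.left_commute intro!: ext sum.swap[THEN trans])
lemma M24: "M2 v (M4 u K) = M4 u (M2 v K)"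
  unfolding M2_def M4_def by (auto simp: sum_distrib_left mult.left_commute intro!: ext sum.swap[THEN trans])
lemma M34: "M3 v (M4 u K) = M4 u (M3 v K)"
  unfolding M3_def M4_def by (auto simp: sum_distrib_left mult.left_commute intro!: ext sum.swap[THEN trans])

lemma act_comp: "act v (act u K) = act (v ** u) K"
  unfolding act_def
  by (simp add: M12 M13 M14 M23 M24 M34 flip: M1_comp M2_comp M3_comp M4_comp)

lemma act_expl: "act v K i j p q = (\<Sum>a\<in>UNIV. \<Sum>b\<in>UNIV. \<Sum>c\<in>UNIV. \<Sum>d\<in>UNIV.
   v$i$a * cnj (v$j$b) * v$p$c * cnj (v$q$d) * K a b c d)"
  unfolding act_def M1_def M2_def M3_def M4_def
  by (simp add: sum_distrib_left mult.assoc)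

lemma cadj_mult: "cadj (A ** B) = cadj B ** cadj (A::complex^'n^'n)"
  unfolding cadj_def matrix_matrix_mult_def
  by (simp add: vec_eq_iff cnj_sum mult.commute)

lemma cadj_cadj[simp]: "cadj (cadj A) = A"
  unfolding cadj_def by (simp add: vec_eq_iff)

lemma unit_col: "u \<in> unitaries \<Longrightarrow> cadj u ** u = mat 1"
  unfolding unitaries_def using matrix_left_right_inverse by blast

lemma unit_mult: assumes uu: "u \<in> unitaries" and vv: "v \<in> unitaries" shows "v ** u \<in> unitaries"
proof -
  have u: "u ** cadj u = mat 1" and v: "v ** cadj v = mat 1" using uu vv unfolding unitaries_def by auto
  have "v ** u ** cadj (v ** u) = v ** (u ** cadj u) ** cadj v"
    by (simp add: cadj_mult matrix_mul_assoc)
  also have "\<dots> = mat 1" using u v by (simp add: matrix_mul_rid)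
  finally show ?thesis unfolding unitaries_def by simp
qed

lemma delta_sum: "(\<Sum>b\<in>UNIV. (if a = b then 1 else 0) * (f b::complex)) = f a" for f :: "'n::finite \<Rightarrow> complex"
proof -
  have "(\<Sum>b\<in>UNIV. (if a = b then 1 else 0) * f b) = (\<Sum>b\<in>UNIV. if a = b then f b else 0)"
    by (rule sum.cong) auto
  then show ?thesis by (simp add: sum.delta sum.delta')
qed

lemma row_orth: "u \<in> unitaries \<Longrightarrow> (\<Sum>a\<in>UNIV. u$i$a * cnj (u$j$a)) = (if i = j then 1 else 0)"
proof -
  assume "u \<in> unitaries"
  then have "(u ** cadj u) $ i $ j = mat 1 $ i $ j" unfolding unitaries_def by simp
  then show ?thesis unfolding matrix_matrix_mult_def cadj_def mat_def by simp
qed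

lemma col_orth: "u \<in> unitaries \<Longrightarrow> (\<Sum>i\<in>UNIV. u$i$a * cnj (u$i$b)) = (if a = b then 1 else 0)"
proof -
  assume "u \<in> unitaries"
  then have "(cadj u ** u) $ b $ a = mat 1 $ b $ a" using unit_col by metis
  then show ?thesis unfolding matrix_matrix_mult_def cadj_def mat_def by (auto simp: mult.commute)
qed

lemma entry_bound: assumes "u \<in> unitaries" shows "norm (u$i$a) \<le> 1"
proof -
  have "(\<Sum>b\<in>UNIV. u$i$b * cnj (u$i$b)) = 1" using row_orth[OF assms, of i i] by simp
  then have "(\<Sum>b\<in>UNIV. (cmod (u$i$b))^2) = 1"
  proof -
    assume h: "(\<Sum>b\<in>UNIV. u$i$b * cnj (u$i$b)) = 1"
    have "complex_of_real (\<Sum>b\<in>UNIV. (cmod (u$i$b))^2) = (\<Sum>b\<in>UNIV. u$i$b * cnj (u$i$b))"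
      unfolding of_real_sum by (rule sum.cong[OF refl]) (rule complex_norm_square)
    then show ?thesis using h by (metis of_real_eq_1_iff)
  qed
  moreover have "(cmod (u$i$a))^2 \<le> (\<Sum>b\<in>UNIV. (cmod (u$i$b))^2)"
    by (rule member_le_sum) auto
  ultimately have "(cmod (u$i$a))^2 \<le> 1" by simp
  then show ?thesis by (simp add: power_le_one_iff)
qed

lemma L12: "u \<in> unitaries \<Longrightarrow> (\<Sum>i\<in>UNIV. M1 u (M2 u K) i i p q) = (\<Sum>i\<in>UNIV. K i i p q)"
proof -
  assume u: "u \<in> unitaries"
  have "(\<Sum>i\<in>UNIV. M1 u (M2 u K) i i p q) = (\<Sum>i\<in>UNIV. \<Sum>a\<in>UNIV. \<Sum>b\<in>UNIV. u$i$a * cnj (u$i$b) * K a b p q)"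
    unfolding M1_def M2_def by (simp add: sum_distrib_left mult.assoc)
  also have "\<dots> = (\<Sum>a\<in>UNIV. \<Sum>i\<in>UNIV. \<Sum>b\<in>UNIV. u$i$a * cnj (u$i$b) * K a b p q)"
    by (rule sum.swap)
  also have "\<dots> = (\<Sum>a\<in>UNIV. \<Sum>b\<in>UNIV. \<Sum>i\<in>UNIV. u$i$a * cnj (u$i$b) * K a b p q)"
    by (rule sum.cong[OF refl], rule sum.swap)
  also have "\<dots> = (\<Sum>a\<in>UNIV. \<Sum>b\<in>UNIV. (\<Sum>i\<in>UNIV. u$i$a * cnj (u$i$b)) * K a b p q)"
    by (simp add: sum_distrib_right)
  also have "\<dots> = (\<Sum>a\<in>UNIV. \<Sum>b\<in>UNIV. (if a = b then 1 else 0) * K a b p q)"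
    by (simp add: col_orth[OF u])
  also have "\<dots> = (\<Sum>a\<in>UNIV. K a a p q)" by (simp add: delta_sum)
  finally show ?thesis .
qed

lemma L34: "u \<in> unitaries \<Longrightarrow> (\<Sum>p\<in>UNIV. M3 u (M4 u K) i j p p) = (\<Sum>p\<in>UNIV. K i j p p)"
proof -
  assume u: "u \<in> unitaries"
  have "(\<Sum>p\<in>UNIV. M3 u (M4 u K) i j p p) = (\<Sum>p\<in>UNIV. \<Sum>a\<in>UNIV. \<Sum>b\<in>UNIV. u$p$a * cnj (u$p$b) * K i j a b)"
    unfolding M3_def M4_def by (simp add: sum_distrib_left mult.assoc)
  also have "\<dots> = (\<Sum>a\<in>UNIV. \<Sum>p\<in>UNIV. \<Sum>b\<in>UNIV. u$p$a * cnj (u$p$b) * K i j a b)"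
    by (rule sum.swap)
  also have "\<dots> = (\<Sum>a\<in>UNIV. \<Sum>b\<in>UNIV. \<Sum>p\<in>UNIV. u$p$a * cnj (u$p$b) * K i j a b)"
    by (rule sum.cong[OF refl], rule sum.swap)
  also have "\<dots> = (\<Sum>a\<in>UNIV. \<Sum>b\<in>UNIV. (\<Sum>p\<in>UNIV. u$p$a * cnj (u$p$b)) * K i j a b)"
    by (simp add: sum_distrib_right)
  also have "\<dots> = (\<Sum>a\<in>UNIV. \<Sum>b\<in>UNIV. (if a = b then 1 else 0) * K i j a b)"
    by (simp add: col_orth[OF u])
  also have "\<dots> = (\<Sum>a\<in>UNIV. K i j a a)" by (simp add: delta_sum)
  finally show ?thesis .
qed

lemma L14: "u \<in> unitaries \<Longrightarrow> (\<Sum>i\<in>UNIV. M1 u (M4 u K) i j p i) = (\<Sum>i\<in>UNIV. K i j p i)"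
proof -
  assume u: "u \<in> unitaries"
  have "(\<Sum>i\<in>UNIV. M1 u (M4 u K) i j p i) = (\<Sum>i\<in>UNIV. \<Sum>a\<in>UNIV. \<Sum>b\<in>UNIV. u$i$a * cnj (u$i$b) * K a j p b)"
    unfolding M1_def M4_def by (simp add: sum_distrib_left mult.assoc)
  also have "\<dots> = (\<Sum>a\<in>UNIV. \<Sum>i\<in>UNIV. \<Sum>b\<in>UNIV. u$i$a * cnj (u$i$b) * K a j p b)"
    by (rule sum.swap)
  also have "\<dots> = (\<Sum>a\<in>UNIV. \<Sum>b\<in>UNIV. \<Sum>i\<in>UNIV. u$i$a * cnj (u$i$b) * K a j p b)"
    by (rule sum.cong[OF refl], rule sum.swap)
  also have "\<dots> = (\<Sum>a\<in>UNIV. \<Sum>b\<in>UNIV. (\<Sum>i\<in>UNIV. u$i$a * cnj (u$i$b)) * K a j p b)"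
    by (simp add: sum_distrib_right)
  also have "\<dots> = (\<Sum>a\<in>UNIV. \<Sum>b\<in>UNIV. (if a = b then 1 else 0) * K a j p b)"
    by (simp add: col_orth[OF u])
  also have "\<dots> = (\<Sum>a\<in>UNIV. K a j p a)" by (simp add: delta_sum)
  finally show ?thesis .
qed

lemma L32: "u \<in> unitaries \<Longrightarrow> (\<Sum>p\<in>UNIV. M3 u (M2 u K) i p p q) = (\<Sum>p\<in>UNIV. K i p p q)"
proof -
  assume u: "u \<in> unitaries"
  have "(\<Sum>p\<in>UNIV. M3 u (M2 u K) i p p q) = (\<Sum>p\<in>UNIV. \<Sum>a\<in>UNIV. \<Sum>b\<in>UNIV. u$p$a * cnj (u$p$b) * K i b a q)"
    unfolding M3_def M2_def by (simp add: sum_distrib_left mult.assoc)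
  also have "\<dots> = (\<Sum>a\<in>UNIV. \<Sum>p\<in>UNIV. \<Sum>b\<in>UNIV. u$p$a * cnj (u$p$b) * K i b a q)"
    by (rule sum.swap)
  also have "\<dots> = (\<Sum>a\<in>UNIV. \<Sum>b\<in>UNIV. \<Sum>p\<in>UNIV. u$p$a * cnj (u$p$b) * K i b a q)"
    by (rule sum.cong[OF refl], rule sum.swap)
  also have "\<dots> = (\<Sum>a\<in>UNIV. \<Sum>b\<in>UNIV. (\<Sum>p\<in>UNIV. u$p$a * cnj (u$p$b)) * K i b a q)"
    by (simp add: sum_distrib_right)
  also have "\<dots> = (\<Sum>a\<in>UNIV. \<Sum>b\<in>UNIV. (if a = b then 1 else 0) * K i b a q)"
    by (simp add: col_orth[OF u])
  also have "\<dots> = (\<Sum>a\<in>UNIV. K i a a q)" by (simp add: delta_sum)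
  finally show ?thesis .
qed

definition LL1 :: "('n::finite\<Rightarrow>'n\<Rightarrow>'n\<Rightarrow>'n\<Rightarrow>complex) \<Rightarrow> complex" where
  "LL1 K = (\<Sum>i\<in>UNIV. \<Sum>p\<in>UNIV. K i i p p)"
definition LL2 :: "('n::finite\<Rightarrow>'n\<Rightarrow>'n\<Rightarrow>'n\<Rightarrow>complex) \<Rightarrow> complex" where
  "LL2 K = (\<Sum>i\<in>UNIV. \<Sum>p\<in>UNIV. K i p p i)"

lemma LL1_act: assumes u: "u \<in> unitaries" shows "LL1 (act u K) = LL1 K"
proof -
  have "LL1 (act u K) = (\<Sum>p\<in>UNIV. \<Sum>i\<in>UNIV. M1 u (M2 u (M3 u (M4 u K))) i i p p)"
    unfolding LL1_def act_def by (rule sum.swap)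
  also have "\<dots> = (\<Sum>p\<in>UNIV. \<Sum>i\<in>UNIV. M3 u (M4 u K) i i p p)"
    by (simp add: L12[OF u])
  also have "\<dots> = (\<Sum>i\<in>UNIV. \<Sum>p\<in>UNIV. M3 u (M4 u K) i i p p)"
    by (rule sum.swap)
  also have "\<dots> = LL1 K" unfolding LL1_def by (simp add: L34[OF u])
  finally show ?thesis .
qed

lemma LL2_act: assumes u: "u \<in> unitaries" shows "LL2 (act u K) = LL2 K"
proof -
  have e: "act u K = M1 u (M4 u (M3 u (M2 u K)))"
    unfolding act_def by (simp add: M34 M24 M23)
  have "LL2 (act u K) = (\<Sum>p\<in>UNIV. \<Sum>i\<in>UNIV. M1 u (M4 u (M3 u (M2 u K))) i p p i)"
    unfolding LL2_def e by (rule sum.swap)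
  also have "\<dots> = (\<Sum>p\<in>UNIV. \<Sum>i\<in>UNIV. M3 u (M2 u K) i p p i)"
    by (simp add: L14[OF u])
  also have "\<dots> = (\<Sum>i\<in>UNIV. \<Sum>p\<in>UNIV. M3 u (M2 u K) i p p i)"
    by (rule sum.swap)
  also have "\<dots> = LL2 K" unfolding LL2_def by (simp add: L32[OF u])
  finally show ?thesis .
qed

lemma sum_if1: "(\<Sum>a\<in>UNIV. (if i = a then x a else 0) * (f a::complex)) = x i * f i"
  for i :: "'n::finite"
proof -
  have "(\<Sum>a\<in>UNIV. (if i = a then x a else 0) * f a) = (\<Sum>a\<in>UNIV. if i = a then x a * f a else 0)"
    by (rule sum.cong) auto
  then show ?thesis by (simp add: sum.delta)
qed

lemma sum_if2: "(\<Sum>a\<in>UNIV. (f a::complex) * (if i = a then x a else 0)) = f i * x i"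
  for i :: "'n::finite"
  using sum_if1[of i x f] by (simp add: mult.commute)

lemma cnj_if: "cnj (if c then x else 0) = (if c then cnj x else 0)" by simp

definition dg :: "('n::finite \<Rightarrow> complex) \<Rightarrow> complex^'n^'n" where
  "dg d = (\<chi> i j. if i = j then d i else 0)"

lemma dg_unit: "(\<And>k. d k * cnj (d k) = 1) \<Longrightarrow> dg d \<in> unitaries"
  unfolding unitaries_def dg_def cadj_def matrix_matrix_mult_def mat_def
  by (auto simp: vec_eq_iff cnj_if sum_if1 cong del: if_weak_cong)

lemma M1_dg: "M1 (dg d) K = (\<lambda>i j p q. d i * K i j p q)"
  unfolding M1_def dg_def by (simp add: sum_if1 cong del: if_weak_cong)
lemma M2_dg: "M2 (dg d) K = (\<lambda>i j p q. cnj (d j) * K i j p q)"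
  unfolding M2_def dg_def by (simp add: sum_if1 cnj_if cong del: if_weak_cong)
lemma M3_dg: "M3 (dg d) K = (\<lambda>i j p q. d p * K i j p q)"
  unfolding M3_def dg_def by (simp add: sum_if1 cong del: if_weak_cong)
lemma M4_dg: "M4 (dg d) K = (\<lambda>i j p q. cnj (d q) * K i j p q)"
  unfolding M4_def dg_def by (simp add: sum_if1 cnj_if cong del: if_weak_cong)

lemma act_dg: "act (dg d) K i j p q = d i * cnj (d j) * d p * cnj (d q) * K i j p q"
  unfolding act_def by (simp add: M1_dg M2_dg M3_dg M4_dg mult.assoc)

definition pm :: "('n::finite \<Rightarrow> 'n) \<Rightarrow> complex^'n^'n" where
  "pm s = (\<chi> i j. if i = s j then 1 else 0)"

lemma pm_eq: "(\<And>x. s (s x) = x) \<Longrightarrow> pm s = (\<chi> i j. if s i = j then 1 else 0)"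
  unfolding pm_def by (simp add: vec_eq_iff) metis

lemma pm_unit: assumes "\<And>x. s (s x) = x" shows "pm s \<in> unitaries"
  unfolding unitaries_def pm_eq[OF assms] cadj_def matrix_matrix_mult_def mat_def
  by (auto simp: vec_eq_iff cnj_if sum_if1 cong del: if_weak_cong) (metis assms)

lemma M1_pm: "(\<And>x. s (s x) = x) \<Longrightarrow> M1 (pm s) K = (\<lambda>i j p q. K (s i) j p q)"
  unfolding M1_def by (simp add: pm_eq sum_if1 cong del: if_weak_cong)
lemma M2_pm: "(\<And>x. s (s x) = x) \<Longrightarrow> M2 (pm s) K = (\<lambda>i j p q. K i (s j) p q)"
  unfolding M2_def by (simp add: pm_eq sum_if1 cnj_if cong del: if_weak_cong)
lemma M3_pm: "(\<And>x. s (s x) = x) \<Longrightarrow> M3 (pm s) K = (\<lambda>i j p q. K i j (s p) q)"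
  unfolding M3_def by (simp add: pm_eq sum_if1 cong del: if_weak_cong)
lemma M4_pm: "(\<And>x. s (s x) = x) \<Longrightarrow> M4 (pm s) K = (\<lambda>i j p q. K i j p (s q))"
  unfolding M4_def by (simp add: pm_eq sum_if1 cnj_if cong del: if_weak_cong)

lemma act_pm: "(\<And>x. s (s x) = x) \<Longrightarrow> act (pm s) K i j p q = K (s i) (s j) (s p) (s q)"
  unfolding act_def by (simp add: M1_pm M2_pm M3_pm M4_pm)

lemma support:
  fixes K :: "'n::finite \<Rightarrow> 'n \<Rightarrow> 'n \<Rightarrow> 'n \<Rightarrow> complex"
  assumes inv: "\<And>v. v \<in> unitaries \<Longrightarrow> act v K = K"
    and nz: "K i j p q \<noteq> 0"
  shows "(i = j \<and> p = q) \<or> (i = q \<and> j = p)"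
proof -
  define d where "d r = (\<lambda>x. if x = r then \<i> else (1::complex))" for r :: 'n
  have f: "d r i * cnj (d r j) * d r p * cnj (d r q) = 1" for r :: 'n
  proof -
    have "dg (d r) \<in> unitaries" by (rule dg_unit) (simp add: d_def)
    then have "act (dg (d r)) K i j p q = K i j p q" using inv by simp
    then have "(d r i * cnj (d r j) * d r p * cnj (d r q) - 1) * K i j p q = 0"
      by (simp add: act_dg algebra_simps)
    then show ?thesis using nz by simp
  qed
  from f[of i] f[of p] f[of j] f[of q] show ?thesis
    unfolding d_def by (auto split: if_splits)
qed

definition sw :: "'n \<Rightarrow> 'n \<Rightarrow> 'n \<Rightarrow> 'n" where
  "sw a b x = (if x = a then b else if x = b then a else x)"

lemma sw_sw[simp]: "sw a b (sw a b x) = x"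
  unfolding sw_def by auto

lemma swap_inv:
  fixes K :: "'n::finite \<Rightarrow> 'n \<Rightarrow> 'n \<Rightarrow> 'n \<Rightarrow> complex"
  assumes inv: "\<And>v. v \<in> unitaries \<Longrightarrow> act v K = K"
  shows "K (sw a b i) (sw a b j) (sw a b p) (sw a b q) = K i j p q"
proof -
  have "act (pm (sw a b)) K i j p q = K i j p q" using inv pm_unit[of "sw a b"] by simp
  then show ?thesis by (simp add: act_pm)
qed

lemma two_swaps: "i \<noteq> p \<Longrightarrow> r \<noteq> s \<Longrightarrow>
  sw (sw i r p) s (sw i r i) = r \<and> sw (sw i r p) s (sw i r p) = s"
  unfolding sw_def by auto

definition e :: "'n \<Rightarrow> 'n \<Rightarrow> complex" where "e x y = (if x = y then 1 else 0)"

lemma act_lin: "act v (\<lambda>i j p q. x * X i j p q + y * Y i j p q + z * Z i j p q) i j p q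
   = x * act v X i j p q + y * act v Y i j p q + z * act v Z i j p q"
  unfolding act_expl
  by (simp add: distrib_left sum.distrib sum_distrib_left mult.assoc mult.left_commute)

lemma ifm: "(x::complex) * (if c then y else 0) = (if c then x * y else 0)"
  "(if c then y else 0) * (x::complex) = (if c then y * x else 0)" by auto

lemma row_orth': "v \<in> unitaries \<Longrightarrow> (\<Sum>b\<in>UNIV. cnj (v$j$b) * v$p$b) = e j p"
  using row_orth[of v p j] unfolding e_def by (auto simp: mult.commute)
lemma row_orth'': "v \<in> unitaries \<Longrightarrow> (\<Sum>b\<in>UNIV. v$p$b * cnj (v$q$b)) = e p q"
  using row_orth[of v p q] unfolding e_def by auto

lemma act_D1: assumes v: "v \<in> unitaries"
  shows "act v (\<lambda>i j p q. e i j * e p q) = (\<lambda>i j p q. e i j * e p q)"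
proof -
  have 4: "M4 v (\<lambda>i j p q. e i j * e p q) = (\<lambda>i j p q. e i j * cnj (v$q$p))"
    unfolding M4_def by (intro ext) (simp add: e_def sum_if2)
  have 3: "M3 v (\<lambda>i j p q. e i j * cnj (v$q$p)) = (\<lambda>i j p q. e i j * e p q)"
    unfolding M3_def
  proof (intro ext)
    fix i j p q
    have "(\<Sum>c\<in>UNIV. v$p$c * (e i j * cnj (v$q$c))) = e i j * (\<Sum>c\<in>UNIV. v$p$c * cnj (v$q$c))"
      by (simp add: sum_distrib_left mult.left_commute)
    then show "(\<Sum>c\<in>UNIV. v$p$c * (e i j * cnj (v$q$c))) = e i j * e p q" by (simp add: row_orth''[OF v])
  qed
  have 2: "M2 v (\<lambda>i j p q. e i j * e p q) = (\<lambda>i j p q. cnj (v$j$i) * e p q)"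
    unfolding M2_def by (intro ext) (simp add: e_def sum_if2)
  have 1: "M1 v (\<lambda>i j p q. cnj (v$j$i) * e p q) = (\<lambda>i j p q. e i j * e p q)"
    unfolding M1_def by (intro ext) (simp add: mult.assoc[symmetric] row_orth''[OF v] flip: sum_distrib_right)
  show ?thesis unfolding act_def 4 3 2 1 ..
qed

lemma act_D2: assumes v: "v \<in> unitaries"
  shows "act v (\<lambda>i j p q. e i q * e j p) = (\<lambda>i j p q. e i q * e j p)"
proof -
  have 4: "M4 v (\<lambda>i j p q. e i q * e j p) = (\<lambda>i j p q. cnj (v$q$i) * e j p)"
    unfolding M4_def by (intro ext) (simp add: e_def sum_if2)
  have 3: "M3 v (\<lambda>i j p q. cnj (v$q$i) * e j p) = (\<lambda>i j p q. cnj (v$q$i) * v$p$j)"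
    unfolding M3_def by (intro ext) (simp add: e_def ifm sum.delta sum.delta')
  have 2: "M2 v (\<lambda>i j p q. cnj (v$q$i) * v$p$j) = (\<lambda>i j p q. cnj (v$q$i) * e j p)"
    unfolding M2_def
  proof (intro ext)
    fix i j p q
    have "(\<Sum>b\<in>UNIV. cnj (v$j$b) * (cnj (v$q$i) * v$p$b)) = cnj (v$q$i) * (\<Sum>b\<in>UNIV. cnj (v$j$b) * v$p$b)"
      by (simp add: sum_distrib_left mult.left_commute)
    then show "(\<Sum>b\<in>UNIV. cnj (v$j$b) * (cnj (v$q$i) * v$p$b)) = cnj (v$q$i) * e j p" by (simp add: row_orth'[OF v])
  qed
  have 1: "M1 v (\<lambda>i j p q. cnj (v$q$i) * e j p) = (\<lambda>i j p q. e i q * e j p)"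
    unfolding M1_def by (intro ext) (simp add: mult.assoc[symmetric] row_orth''[OF v] flip: sum_distrib_right)
  show ?thesis unfolding act_def 4 3 2 1 ..
qed

lemma act_D3:
  shows "act v (\<lambda>i j p q. e i j * e j p * e p q) i j p q =
     (\<Sum>a\<in>UNIV. v$i$a * cnj (v$j$a) * v$p$a * cnj (v$q$a))"
proof -
  have 4: "M4 v (\<lambda>i j p q. e i j * e j p * e p q) = (\<lambda>i j p q. e i j * e j p * cnj (v$q$p))"
    unfolding M4_def by (intro ext) (simp add: e_def sum_if2)
  have 3: "M3 v (\<lambda>i j p q. e i j * e j p * cnj (v$q$p)) = (\<lambda>i j p q. e i j * v$p$j * cnj (v$q$j))"
    unfolding M3_def by (intro ext) (simp add: e_def ifm sum.delta sum.delta')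
  have 2: "M2 v (\<lambda>i j p q. e i j * v$p$j * cnj (v$q$j)) = (\<lambda>i j p q. cnj (v$j$i) * v$p$i * cnj (v$q$i))"
    unfolding M2_def by (intro ext) (simp add: e_def ifm mult.assoc)
  show ?thesis unfolding act_def 4 3 2 M1_def by (simp add: mult.assoc)
qed

lemma e_sum1: "(\<Sum>j\<in>UNIV. e i j * f j) = f i" for i :: "'n::finite"
proof -
  have "(\<Sum>j\<in>UNIV. e i j * f j) = (\<Sum>j\<in>UNIV. if i = j then f j else 0)"
    by (rule sum.cong) (auto simp: e_def)
  then show ?thesis by simp
qed
lemma e_sum2: "(\<Sum>j\<in>UNIV. f j * e k j) = f k" for k :: "'n::finite"
  using e_sum1[of k f] by (simp add: mult.commute)
lemma e_sum0: "(\<Sum>j\<in>UNIV. e i j) = 1" for i :: "'n::finite"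
  using e_sum1[of i "\<lambda>_. 1"] by simp

lemma e_sumc: "(\<Sum>j\<in>UNIV. c * e i j) = c" for i :: "'n::finite"
  by (simp add: e_sum0 flip: sum_distrib_left)

definition ww :: "'n \<Rightarrow> 'n \<Rightarrow> 'n \<Rightarrow> complex" where
  "ww r s x = (if x = r then 1 else if x = s then 2 else 0)"

definition rot :: "'n::finite \<Rightarrow> 'n \<Rightarrow> complex^'n^'n" where
  "rot r s = (\<chi> i j. e i j - 2/5 * ww r s i * ww r s j)"

lemma rot_unit: fixes r s :: "'n::finite" assumes rs: "r \<noteq> s" shows "rot r s \<in> unitaries"
proof -
  let ?w = "ww r s"
  define c :: complex where "c = 2/5"
  have cw: "cnj (?w x) = ?w x" for x unfolding ww_def by auto
  have ce: "cnj (e x y) = e x y" for x y unfolding e_def by auto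
  have s1: "(\<Sum>j\<in>UNIV. e i j * e k j) = e i k" for i k :: 'n unfolding e_def by (simp add: ifm)
  have s2: "(\<Sum>j\<in>UNIV. e i j * ?w j) = ?w i" for i :: 'n by (simp add: e_sum1)
  have s3: "(\<Sum>j\<in>UNIV. ?w j * e k j) = ?w k" for k :: 'n by (simp add: e_sum2)
  have ww2: "?w j * ?w j = e r j + 4 * e s j" for j using rs unfolding ww_def e_def by auto
  have s4: "(\<Sum>j\<in>UNIV. ?w j * ?w j) = 5"
    unfolding ww2 by (simp add: sum.distrib e_sum0 flip: sum_distrib_left)
  have ent: "(rot r s ** cadj (rot r s)) $ i $ k = mat 1 $ i $ k" for i k
  proof -
    have "(rot r s ** cadj (rot r s)) $ i $ k = (\<Sum>j\<in>UNIV. (e i j - c * ?w i * ?w j) * (e k j - c * ?w k * ?w j))"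
      unfolding rot_def cadj_def matrix_matrix_mult_def c_def by (simp add: cw ce)
    also have "\<dots> = (\<Sum>j\<in>UNIV. e i j * e k j - c * ?w k * (e i j * ?w j) - c * ?w i * (?w j * e k j) + c * c * ?w i * ?w k * (?w j * ?w j))"
      by (rule sum.cong[OF refl]) (simp add: algebra_simps)
    also have "\<dots> = e i k - c * ?w k * ?w i - c * ?w i * ?w k + c * c * ?w i * ?w k * 5"
      by (simp add: sum.distrib sum_subtractf s1 s2 s3 s4 flip: sum_distrib_left)
    also have "\<dots> = e i k" by (simp add: c_def algebra_simps)
    finally show ?thesis by (simp add: mat_def e_def)
  qed
  show ?thesis unfolding unitaries_def by (simp add: vec_eq_iff ent)
qed

lemma rot_row: fixes r s :: "'n::finite" assumes rs: "r \<noteq> s"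
  shows "(\<Sum>a\<in>UNIV. rot r s$r$a * cnj (rot r s$r$a) * rot r s$r$a * cnj (rot r s$r$a)) = 337/625"
proof -
  have t: "rot r s$r$a * cnj (rot r s$r$a) * rot r s$r$a * cnj (rot r s$r$a) = 81/625 * e r a + 256/625 * e s a" for a
    using rs unfolding rot_def ww_def e_def by auto
  show ?thesis unfolding t by (simp only: sum.distrib e_sumc) simp
qed

lemma commutant:
  fixes K :: "'n::finite \<Rightarrow> 'n \<Rightarrow> 'n \<Rightarrow> 'n \<Rightarrow> complex"
  assumes card: "CARD('n) \<ge> 2" and inv: "\<And>v. v \<in> unitaries \<Longrightarrow> act v K = K"
  shows "\<exists>A B. \<forall>i j p q. K i j p q = A * (e i j * e p q) + B * (e i q * e j p)"
proof -
  obtain r :: 'n where True by simp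
  have "UNIV \<noteq> {r}" using card by (metis One_nat_def card.empty card_insert_disjoint empty_iff finite.emptyI not_less_eq_eq numeral_2_eq_2 order_refl)
  have "\<exists>s. r \<noteq> s"
  proof (rule ccontr)
    assume "\<not> (\<exists>s. r \<noteq> s)"
    then have "UNIV = {r}" by auto
    with \<open>UNIV \<noteq> {r}\<close> show False by simp
  qed
  then obtain s where rs: "r \<noteq> s" by blast
  define A where "A = K r r s s"
  define B where "B = K r s s r"
  define D where "D = K r r r r"
  note SW = swap_inv[OF inv]
  have KA: "K i i p p = A" if ip: "i \<noteq> p" for i p
  proof -
    let ?p1 = "sw i r p"
    have "K i i p p = K (sw i r i) (sw i r i) ?p1 ?p1" using SW[of i r i i p p] by simp
    also have "\<dots> = K (sw ?p1 s (sw i r i)) (sw ?p1 s (sw i r i)) (sw ?p1 s ?p1) (sw ?p1 s ?p1)"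
      using SW[of ?p1 s "sw i r i" "sw i r i" ?p1 ?p1] by simp
    also have "\<dots> = A" using two_swaps[OF ip rs] by (simp add: A_def)
    finally show ?thesis .
  qed
  have KB: "K i p p i = B" if ip: "i \<noteq> p" for i p
  proof -
    let ?p1 = "sw i r p"
    have "K i p p i = K (sw i r i) ?p1 ?p1 (sw i r i)" using SW[of i r i p p i] by simp
    also have "\<dots> = K (sw ?p1 s (sw i r i)) (sw ?p1 s ?p1) (sw ?p1 s ?p1) (sw ?p1 s (sw i r i))"
      using SW[of ?p1 s "sw i r i" ?p1 ?p1 "sw i r i"] by simp
    also have "\<dots> = B" using two_swaps[OF ip rs] by (simp add: B_def)
    finally show ?thesis .
  qed
  have KD: "K i i i i = D" for i
  proof -
    have "K i i i i = K (sw i r i) (sw i r i) (sw i r i) (sw i r i)" using SW[of i r i i i i] by simp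
    also have "\<dots> = D" by (simp add: D_def sw_def)
    finally show ?thesis .
  qed
  define E where "E = D - A - B"
  have form: "K = (\<lambda>i j p q. A * (e i j * e p q) + B * (e i q * e j p) + E * (e i j * e j p * e p q))"
  proof (intro ext)
    fix i j p q
    show "K i j p q = A * (e i j * e p q) + B * (e i q * e j p) + E * (e i j * e j p * e p q)"
    proof (cases "(i = j \<and> p = q) \<or> (i = q \<and> j = p)")
      case True
      then show ?thesis using KA KB KD unfolding E_def e_def by (cases "i = p") auto
    next
      case False
      then have "K i j p q = 0" using support[OF inv] by blast
      then show ?thesis using False unfolding e_def by auto
    qed
  qed
  have u: "rot r s \<in> unitaries" by (rule rot_unit[OF rs])
  have "K r r r r = act (rot r s) K r r r r" using inv[OF u] by simp
  also have "\<dots> = A * act (rot r s) (\<lambda>i j p q. e i j * e p q) r r r r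
      + B * act (rot r s) (\<lambda>i j p q. e i q * e j p) r r r r
      + E * act (rot r s) (\<lambda>i j p q. e i j * e j p * e p q) r r r r"
    by (subst form) (rule act_lin)
  also have "\<dots> = A + B + E * (337/625)"
    unfolding act_D1[OF u] act_D2[OF u] act_D3 rot_row[OF rs] by (simp add: e_def)
  finally have 1: "K r r r r = A + B + E * (337/625)" .
  have 2: "K r r r r = A + B + E" using KD[of r] unfolding D_def E_def by simp
  have "E = 0" using 1 2 by simp
  then show ?thesis using form by auto
qed

lemma pull2: "(\<Sum>a\<in>A. \<Sum>b\<in>B. \<Sum>p\<in>P. F a b p) = (\<Sum>p\<in>P. \<Sum>a\<in>A. \<Sum>b\<in>B. F a b p)"
proof -
  have "(\<Sum>a\<in>A. \<Sum>b\<in>B. \<Sum>p\<in>P. F a b p) = (\<Sum>a\<in>A. \<Sum>p\<in>P. \<Sum>b\<in>B. F a b p)"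
    by (rule sum.cong[OF refl], rule sum.swap)
  also have "\<dots> = (\<Sum>p\<in>P. \<Sum>a\<in>A. \<Sum>b\<in>B. F a b p)" by (rule sum.swap)
  finally show ?thesis .
qed

lemma pull3: "(\<Sum>a\<in>A. \<Sum>b\<in>B. \<Sum>c\<in>C. \<Sum>p\<in>P. F a b c p) = (\<Sum>p\<in>P. \<Sum>a\<in>A. \<Sum>b\<in>B. \<Sum>c\<in>C. F a b c p)"
proof -
  have "(\<Sum>a\<in>A. \<Sum>b\<in>B. \<Sum>c\<in>C. \<Sum>p\<in>P. F a b c p) = (\<Sum>a\<in>A. \<Sum>p\<in>P. \<Sum>b\<in>B. \<Sum>c\<in>C. F a b c p)"
    by (rule sum.cong[OF refl], rule pull2)
  also have "\<dots> = (\<Sum>p\<in>P. \<Sum>a\<in>A. \<Sum>b\<in>B. \<Sum>c\<in>C. F a b c p)" by (rule sum.swap)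
  finally show ?thesis .
qed

lemma pull4: "(\<Sum>a\<in>A. \<Sum>b\<in>B. \<Sum>c\<in>C. \<Sum>d\<in>D. \<Sum>p\<in>P. F a b c d p) = (\<Sum>p\<in>P. \<Sum>a\<in>A. \<Sum>b\<in>B. \<Sum>c\<in>C. \<Sum>d\<in>D. F a b c d p)"
proof -
  have "(\<Sum>a\<in>A. \<Sum>b\<in>B. \<Sum>c\<in>C. \<Sum>d\<in>D. \<Sum>p\<in>P. F a b c d p) = (\<Sum>a\<in>A. \<Sum>p\<in>P. \<Sum>b\<in>B. \<Sum>c\<in>C. \<Sum>d\<in>D. F a b c d p)"
    by (rule sum.cong[OF refl], rule pull3)
  also have "\<dots> = (\<Sum>p\<in>P. \<Sum>a\<in>A. \<Sum>b\<in>B. \<Sum>c\<in>C. \<Sum>d\<in>D. F a b c d p)" by (rule sum.swap)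
  finally show ?thesis .
qed

lemma ad_entry: "(ad w z) $ i $ j = (\<Sum>a\<in>UNIV. \<Sum>b\<in>UNIV. w$i$a * cnj (w$j$b) * z$a$b)"
proof -
  have "(ad w z) $ i $ j = (\<Sum>b\<in>UNIV. \<Sum>a\<in>UNIV. w$i$a * z$a$b * cnj (w$j$b))"
    unfolding ad_def matrix_matrix_mult_def cadj_def by (simp add: sum_distrib_right)
  also have "\<dots> = (\<Sum>a\<in>UNIV. \<Sum>b\<in>UNIV. w$i$a * cnj (w$j$b) * z$a$b)"
    by (subst sum.swap) (simp add: mult_ac)
  finally show ?thesis .
qed

lemma rho_entry:
  fixes T :: "complex^'n^'n \<Rightarrow> complex^'n^'n"
  assumes hT: "\<And>y a b. T y $ a $ b = (\<Sum>c\<in>UNIV. \<Sum>d\<in>UNIV. G a b c d * y$c$d)"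
  shows "rho u T x $ i $ j = (\<Sum>p\<in>UNIV. \<Sum>q\<in>UNIV. x$p$q * act u G i j p q)"
proof -
  have y: "ad (transpose u) x $ c $ d = (\<Sum>p\<in>UNIV. \<Sum>q\<in>UNIV. u$p$c * cnj (u$q$d) * x$p$q)" for c d
    by (simp add: ad_entry transpose_def)
  have "rho u T x $ i $ j = (\<Sum>a\<in>UNIV. \<Sum>b\<in>UNIV. \<Sum>c\<in>UNIV. \<Sum>d\<in>UNIV. \<Sum>p\<in>UNIV. \<Sum>q\<in>UNIV.
       u$i$a * cnj (u$j$b) * (G a b c d * (u$p$c * cnj (u$q$d) * x$p$q)))"
    unfolding rho_def comp_def ad_entry[of u] hT y by (simp add: sum_distrib_left)
  also have "\<dots> = (\<Sum>p\<in>UNIV. \<Sum>a\<in>UNIV. \<Sum>b\<in>UNIV. \<Sum>c\<in>UNIV. \<Sum>d\<in>UNIV. \<Sum>q\<in>UNIV.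
       u$i$a * cnj (u$j$b) * (G a b c d * (u$p$c * cnj (u$q$d) * x$p$q)))"
    by (rule pull4)
  also have "\<dots> = (\<Sum>p\<in>UNIV. \<Sum>q\<in>UNIV. \<Sum>a\<in>UNIV. \<Sum>b\<in>UNIV. \<Sum>c\<in>UNIV. \<Sum>d\<in>UNIV.
       u$i$a * cnj (u$j$b) * (G a b c d * (u$p$c * cnj (u$q$d) * x$p$q)))"
    by (rule sum.cong[OF refl], rule pull4)
  also have "\<dots> = (\<Sum>p\<in>UNIV. \<Sum>q\<in>UNIV. x$p$q * act u G i j p q)"
    unfolding act_expl by (simp add: sum_distrib_left mult_ac)
  finally show ?thesis .
qed

lemma haar_meas:
  assumes h: "haar_unitary \<mu>" and c: "continuous_on UNIV f"
  shows "f \<in> borel_measurable \<mu>"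
proof -
  have s: "sets \<mu> = sets (restrict_space borel unitaries)" using h unfolding haar_unitary_def by auto
  have "f \<in> borel_measurable (restrict_space borel unitaries)"
    by (rule measurable_restrict_space1) (rule borel_measurable_continuous_onI[OF c])
  then show ?thesis by (simp add: measurable_cong_sets[OF s refl])
qed

lemma cont_act: "continuous_on UNIV (\<lambda>u. act u G i j p q)"
  unfolding act_expl by (intro continuous_intros)

lemma act_bound: assumes u: "u \<in> unitaries"
  shows "cmod (act u G i j p q) \<le> (\<Sum>a\<in>UNIV. \<Sum>b\<in>UNIV. \<Sum>c\<in>UNIV. \<Sum>d\<in>UNIV. cmod (G a b c d))"
  unfolding act_expl
proof (intro sum_norm_le)
  fix a b c d
  have "cmod (u$i$a * cnj (u$j$b) * u$p$c * cnj (u$q$d)) \<le> 1"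
    using entry_bound[OF u] by (simp add: norm_mult mult_le_one)
  then have "cmod (u$i$a * cnj (u$j$b) * u$p$c * cnj (u$q$d)) * cmod (G a b c d) \<le> 1 * cmod (G a b c d)"
    by (rule mult_right_mono) simp
  then show "cmod (u$i$a * cnj (u$j$b) * u$p$c * cnj (u$q$d) * G a b c d) \<le> cmod (G a b c d)"
    by (simp add: norm_mult)
qed

lemma integrable_act: assumes h: "haar_unitary \<mu>"
  shows "integrable \<mu> (\<lambda>u. act u G i j p q)"
proof -
  interpret prob_space \<mu> using h unfolding haar_unitary_def by auto
  have sp: "space \<mu> = unitaries" using h unfolding haar_unitary_def by auto
  show ?thesis
    by (rule integrable_const_bound[where B="\<Sum>a\<in>UNIV. \<Sum>b\<in>UNIV. \<Sum>c\<in>UNIV. \<Sum>d\<in>UNIV. cmod (G a b c d)"])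
       (auto intro!: AE_I2 act_bound haar_meas[OF h] cont_act simp: sp)
qed

lemma haar_mult_meas: assumes h: "haar_unitary \<mu>" and v: "v \<in> unitaries"
  shows "(\<lambda>u. v ** u) \<in> measurable \<mu> \<mu>"
proof -
  have s: "sets \<mu> = sets (restrict_space borel unitaries)" using h unfolding haar_unitary_def by auto
  have c: "continuous_on UNIV (\<lambda>u. v ** u)"
    unfolding matrix_matrix_mult_def by (intro continuous_intros)
  have "(\<lambda>u. v ** u) \<in> measurable (restrict_space borel unitaries) (restrict_space borel unitaries)"
    by (rule measurable_restrict_space3) (auto intro: borel_measurable_continuous_onI[OF c] unit_mult[OF _ v])
  then show ?thesis using measurable_cong_sets[OF s s] by simp
qed

definition KK :: "(complex^'n^'n) measure \<Rightarrow> ('n::finite\<Rightarrow>'n\<Rightarrow>'n\<Rightarrow>'n\<Rightarrow>complex) \<Rightarrow> ('n\<Rightarrow>'n\<Rightarrow>'n\<Rightarrow>'n\<Rightarrow>complex)" where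
  "KK \<mu> G = (\<lambda>i j p q. integral\<^sup>L \<mu> (\<lambda>u. act u G i j p q))"

lemma KK_inv: assumes h: "haar_unitary \<mu>" and v: "v \<in> unitaries"
  shows "act v (KK \<mu> G) = KK \<mu> G"
proof (intro ext)
  fix i j p q
  note I = integrable_act[OF h]
  have "act v (KK \<mu> G) i j p q = integral\<^sup>L \<mu> (\<lambda>u. act v (act u G) i j p q)"
    unfolding KK_def act_expl[of v]
    by (simp add: integral_sum integrable_sum I integral_mult_right_zero)
  also have "\<dots> = integral\<^sup>L \<mu> (\<lambda>u. act (v ** u) G i j p q)" by (simp add: act_comp)
  also have "\<dots> = integral\<^sup>L (distr \<mu> \<mu> (\<lambda>u. v ** u)) (\<lambda>u. act u G i j p q)"
    by (rule integral_distr[symmetric]) (auto intro: haar_mult_meas[OF h v] haar_meas[OF h] cont_act)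
  also have "\<dots> = KK \<mu> G i j p q" using h v unfolding haar_unitary_def KK_def by simp
  finally show "act v (KK \<mu> G) i j p q = KK \<mu> G i j p q" .
qed

lemma LL1_KK: assumes h: "haar_unitary \<mu>" shows "LL1 (KK \<mu> G) = LL1 G"
proof -
  interpret prob_space \<mu> using h unfolding haar_unitary_def by auto
  have sp: "space \<mu> = unitaries" using h unfolding haar_unitary_def by auto
  have "LL1 (KK \<mu> G) = integral\<^sup>L \<mu> (\<lambda>u. LL1 (act u G))"
    unfolding LL1_def KK_def by (simp add: integral_sum integrable_sum integrable_act[OF h])
  also have "\<dots> = integral\<^sup>L \<mu> (\<lambda>u. LL1 G)"
    by (rule Bochner_Integration.integral_cong[OF refl]) (simp add: sp LL1_act)
  also have "\<dots> = LL1 G" by (simp add: prob_space)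
  finally show ?thesis .
qed

lemma LL2_KK: assumes h: "haar_unitary \<mu>" shows "LL2 (KK \<mu> G) = LL2 G"
proof -
  interpret prob_space \<mu> using h unfolding haar_unitary_def by auto
  have sp: "space \<mu> = unitaries" using h unfolding haar_unitary_def by auto
  have "LL2 (KK \<mu> G) = integral\<^sup>L \<mu> (\<lambda>u. LL2 (act u G))"
    unfolding LL2_def KK_def by (simp add: integral_sum integrable_sum integrable_act[OF h])
  also have "\<dots> = integral\<^sup>L \<mu> (\<lambda>u. LL2 G)"
    by (rule Bochner_Integration.integral_cong[OF refl]) (simp add: sp LL2_act)
  also have "\<dots> = LL2 G" by (simp add: prob_space)
  finally show ?thesis .
qed

lemma norm_vec_le_sum: "norm (x::'a::real_normed_vector^'n) \<le> (\<Sum>i\<in>UNIV. norm (x$i))"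
  by (simp add: norm_vec_def L2_set_le_sum)

lemma twirl_entry:
  fixes T :: "complex^'n^'n \<Rightarrow> complex^'n^'n"
  assumes h: "haar_unitary \<mu>"
    and hT: "\<And>y a b. T y $ a $ b = (\<Sum>c\<in>UNIV. \<Sum>d\<in>UNIV. G a b c d * y$c$d)"
  shows "twirl \<mu> T x $ i $ j = (\<Sum>p\<in>UNIV. \<Sum>q\<in>UNIV. x$p$q * KK \<mu> G i j p q)"
proof -
  interpret prob_space \<mu> using h unfolding haar_unitary_def by auto
  have sp: "space \<mu> = unitaries" using h unfolding haar_unitary_def by auto
  define R where "R u = (\<chi> i j. \<Sum>p\<in>UNIV. \<Sum>q\<in>UNIV. x$p$q * act u G i j p q)" for u :: "complex^'n^'n"
  have rR: "(\<lambda>u. rho u T x) = R" unfolding R_def by (intro ext) (simp add: vec_eq_iff rho_entry[OF hT])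
  define BG where "BG = (\<Sum>a\<in>UNIV. \<Sum>b\<in>UNIV. \<Sum>c\<in>UNIV. \<Sum>d\<in>UNIV. cmod (G a b c d))"
  have eb: "cmod (R u $ i $ j) \<le> (\<Sum>p\<in>UNIV. \<Sum>q\<in>UNIV. cmod (x$p$q) * BG)" if u: "u \<in> unitaries" for u i j
    unfolding R_def
  proof (simp, intro sum_norm_le)
    fix p q
    show "cmod (x$p$q * act u G i j p q) \<le> cmod (x$p$q) * BG"
      unfolding norm_mult BG_def by (rule mult_left_mono[OF act_bound[OF u]]) simp
  qed
  define B0 where "B0 = (\<Sum>i\<in>(UNIV::'n set). \<Sum>j\<in>(UNIV::'n set). \<Sum>p\<in>UNIV. \<Sum>q\<in>UNIV. cmod (x$p$q) * BG)"
  have nb: "norm (R u) \<le> B0"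
    if u: "u \<in> unitaries" for u
  proof -
    have "norm (R u) \<le> (\<Sum>i\<in>UNIV. norm (R u $ i))" by (rule norm_vec_le_sum)
    also have "\<dots> \<le> (\<Sum>i\<in>UNIV. \<Sum>j\<in>UNIV. norm (R u $ i $ j))"
      by (rule sum_mono) (rule norm_vec_le_sum)
    also have "\<dots> \<le> (\<Sum>i\<in>(UNIV::'n set). \<Sum>j\<in>(UNIV::'n set). \<Sum>p\<in>UNIV. \<Sum>q\<in>UNIV. cmod (x$p$q) * BG)"
      by (intro sum_mono) (rule eb[OF u])
    finally show ?thesis unfolding B0_def .
  qed
  have cR: "continuous_on UNIV R" unfolding R_def
    by (intro continuous_intros cont_act)
  have intR: "integrable \<mu> R"
    by (rule integrable_const_bound[where B=B0])
       (auto intro!: AE_I2 nb haar_meas[OF h] cR simp: sp)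
  have bl: "bounded_linear (\<lambda>m::complex^'n^'n. m $ i $ j)"
    using bounded_linear_compose[OF bounded_linear_vec_nth[of j] bounded_linear_vec_nth[of i]] by simp
  have "twirl \<mu> T x $ i $ j = integral\<^sup>L \<mu> R $ i $ j"
    unfolding twirl_def[abs_def] rR by simp
  also have "\<dots> = integral\<^sup>L \<mu> (\<lambda>u. R u $ i $ j)"
    by (rule integral_bounded_linear[OF bl intR, symmetric])
  also have "\<dots> = (\<Sum>p\<in>UNIV. \<Sum>q\<in>UNIV. x$p$q * KK \<mu> G i j p q)"
    unfolding R_def KK_def by (simp add: integral_sum integrable_sum integrable_act[OF h])
  finally show ?thesis .
qed

lemma twirl_form:
  fixes T :: "complex^'n^'n \<Rightarrow> complex^'n^'n"
  assumes h: "haar_unitary \<mu>" and card: "CARD('n) \<ge> 2"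
    and hT: "\<And>y a b. T y $ a $ b = (\<Sum>c\<in>UNIV. \<Sum>d\<in>UNIV. G a b c d * y$c$d)"
  shows "twirl \<mu> T x $ i $ j =
     (of_nat CARD('n) * LL1 G - LL2 G) / (of_nat CARD('n) * ((of_nat CARD('n))^2 - 1)) * e i j * trace x
   + (of_nat CARD('n) * LL2 G - LL1 G) / (of_nat CARD('n) * ((of_nat CARD('n))^2 - 1)) * x$j$i"
proof -
  let ?n = "of_nat CARD('n) :: complex"
  obtain A0 B0 where AB: "\<And>i j p q. KK \<mu> G i j p q = A0 * (e i j * e p q) + B0 * (e i q * e j p)"
    using commutant[OF card KK_inv[OF h]] by blast
  have sume: "(\<Sum>p\<in>UNIV. e i p) = 1" for i :: 'n by (rule e_sum0)
  have eii: "e i i = 1" for i :: 'n by (simp add: e_def)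
  have ee: "e i p * e i p = e i p" for i p :: 'n by (simp add: e_def)
  have ee2: "e i p * e p i = e i p" for i p :: 'n by (simp add: e_def)
  have P: "LL1 G = A0 * ?n^2 + B0 * ?n"
  proof -
    have "LL1 G = LL1 (KK \<mu> G)" by (simp add: LL1_KK[OF h])
    also have "\<dots> = (\<Sum>i\<in>(UNIV::'n set). \<Sum>p\<in>(UNIV::'n set). A0 + B0 * e i p)"
      unfolding LL1_def AB by (simp add: eii ee)
    also have "\<dots> = A0 * ?n^2 + B0 * ?n"
      by (simp add: sum.distrib sume power2_eq_square flip: sum_distrib_left) (simp add: algebra_simps)
    finally show ?thesis .
  qed
  have Q: "LL2 G = A0 * ?n + B0 * ?n^2"
  proof -
    have "LL2 G = LL2 (KK \<mu> G)" by (simp add: LL2_KK[OF h])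
    also have "\<dots> = (\<Sum>i\<in>(UNIV::'n set). \<Sum>p\<in>(UNIV::'n set). A0 * e i p + B0)"
      unfolding LL2_def AB by (simp add: eii ee2)
    also have "\<dots> = A0 * ?n + B0 * ?n^2"
      by (simp add: sum.distrib sume power2_eq_square flip: sum_distrib_left) (simp add: algebra_simps)
    finally show ?thesis .
  qed
  have n2: "?n \<noteq> 0" "?n^2 - 1 \<noteq> 0"
  proof -
    show "?n \<noteq> 0" using card by simp
    have "(1::nat) < CARD('n)^2" using card by (intro one_less_power) auto
    then have "CARD('n)^2 \<noteq> (1::nat)" by (metis less_irrefl)
    then have "?n^2 \<noteq> 1" by (metis of_nat_1 of_nat_eq_iff of_nat_power)
    then show "?n^2 - 1 \<noteq> 0" by simp
  qed
  have nz: "?n * (?n^2 - 1) \<noteq> 0" using n2 by simp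
  have a0: "?n * LL1 G - LL2 G = A0 * (?n * (?n^2 - 1))"
    unfolding P Q power2_eq_square by (simp add: algebra_simps)
  have b0: "?n * LL2 G - LL1 G = B0 * (?n * (?n^2 - 1))"
    unfolding P Q power2_eq_square by (simp add: algebra_simps)
  have A0: "A0 = (?n * LL1 G - LL2 G) / (?n * (?n^2 - 1))"
    unfolding a0 using nz by simp
  have B0: "B0 = (?n * LL2 G - LL1 G) / (?n * (?n^2 - 1))"
    unfolding b0 using nz by simp
  have "twirl \<mu> T x $ i $ j = (\<Sum>p\<in>UNIV. \<Sum>q\<in>UNIV. x$p$q * (A0 * (e i j * e p q) + B0 * (e i q * e j p)))"
    by (simp add: twirl_entry[OF h hT] AB)
  also have "\<dots> = A0 * e i j * trace x + B0 * x$j$i"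
  proof -
    have "(\<Sum>p\<in>UNIV. \<Sum>q\<in>UNIV. x$p$q * (A0 * (e i j * e p q) + B0 * (e i q * e j p)))
      = (\<Sum>p\<in>UNIV. A0 * e i j * (\<Sum>q\<in>UNIV. e p q * x$p$q) + B0 * e j p * (\<Sum>q\<in>UNIV. e i q * x$p$q))"
      by (simp add: sum.distrib sum_distrib_left algebra_simps)
    also have "\<dots> = (\<Sum>p\<in>UNIV. A0 * e i j * x$p$p + B0 * (e j p * x$p$i))"
      by (simp add: e_sum1 mult.assoc)
    also have "\<dots> = A0 * e i j * trace x + B0 * x$j$i"
      by (simp add: sum.distrib trace_def e_sum1 flip: sum_distrib_left)
    finally show ?thesis .
  qed
  finally show ?thesis unfolding A0 B0 .
qed

context
  fixes sc :: "complex \<Rightarrow> 'b::ring_1 \<Rightarrow> 'b" and st :: "'b \<Rightarrow> 'b" and tau :: "'b \<Rightarrow> complex"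
  assumes tsa: "tracial_star_alg sc st tau"
begin

lemma tau_add: "tau (x + y) = tau x + tau y" using tsa[unfolded tracial_star_alg_def, THEN conjunct2, THEN conjunct2, THEN conjunct2, THEN conjunct2, THEN conjunct2, THEN conjunct2, THEN conjunct2, THEN conjunct2, THEN conjunct2, THEN conjunct1] by blast
lemma tau_0: "tau 0 = 0" using tau_add[of 0 0] by simp
lemma tau_sum: "tau (\<Sum>i\<in>S. f i) = (\<Sum>i\<in>S. tau (f i))"
  by (induction S rule: infinite_finite_induct) (auto simp: tau_0 tau_add)
lemma tau_neg: "tau (- x) = - tau x"
  using tau_add[of x "- x"] by (simp add: tau_0 eq_neg_iff_add_eq_0 add.commute)
lemma tau_diff: "tau (x - y) = tau x - tau y" using tau_add[of x "- y"] by (simp add: tau_neg)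
lemma tau_sc: "tau (sc c x) = c * tau x" using tsa[unfolded tracial_star_alg_def, THEN conjunct2, THEN conjunct2, THEN conjunct2, THEN conjunct2, THEN conjunct2, THEN conjunct2, THEN conjunct2, THEN conjunct2, THEN conjunct2, THEN conjunct2, THEN conjunct1] by blast
lemma tau_comm: "tau (x * y) = tau (y * x)" using tsa[unfolded tracial_star_alg_def, THEN conjunct2, THEN conjunct2, THEN conjunct2, THEN conjunct2, THEN conjunct2, THEN conjunct2, THEN conjunct2, THEN conjunct2, THEN conjunct2, THEN conjunct2, THEN conjunct2, THEN conjunct2, THEN conjunct1] by blast
lemma tau_real: "tau (st x * x) \<in> \<real>" using tsa[unfolded tracial_star_alg_def, THEN conjunct2, THEN conjunct2, THEN conjunct2, THEN conjunct2, THEN conjunct2, THEN conjunct2, THEN conjunct2, THEN conjunct2, THEN conjunct2, THEN conjunct2, THEN conjunct2, THEN conjunct2, THEN conjunct2, THEN conjunct1] by blast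
lemma st_add: "st (x + y) = st x + st y" using tsa[unfolded tracial_star_alg_def, THEN conjunct2, THEN conjunct2, THEN conjunct2, THEN conjunct2, THEN conjunct2, THEN conjunct2, THEN conjunct1] by blast
lemma st_neg: "st (- x) = - st x"
proof -
  have "st x + st (- x) = st 0" using st_add[of x "- x"] by simp
  moreover have "st 0 = 0" using st_add[of 0 0] by simp
  ultimately show ?thesis by (simp add: eq_neg_iff_add_eq_0 add.commute)
qed
lemma st_diff: "st (x - y) = st x - st y" using st_add[of x "- y"] by (simp add: st_neg)
lemma sc_mult: "sc c (x * y) = sc c x * y \<and> sc c (x * y) = x * sc c y"
  using tsa[unfolded tracial_star_alg_def, THEN conjunct2, THEN conjunct2, THEN conjunct2, THEN conjunct2, THEN conjunct1] by blast
lemma sc_right: "x * sc c 1 = sc c x"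
  using sc_mult[of c x 1] by simp
lemma sc_left: "sc c x * y = sc c (x * y)"
  using sc_mult[of c x y] by simp

lemma Tmap_coef:
  "Tmap sc st tau a y $ i $ j = (\<Sum>c\<in>UNIV. \<Sum>d\<in>UNIV. tau (a$i$c * st (a$j$d)) * y$c$d)"
proof -
  have "Tmap sc st tau a y $ i $ j = tau (\<Sum>d\<in>UNIV. \<Sum>c\<in>UNIV. a$i$c * sc (y$c$d) 1 * st (a$j$d))"
    unfolding Tmap_def matrix_matrix_mult_def tens1_def madj_def by (simp add: sum_distrib_right)
  also have "\<dots> = (\<Sum>d\<in>UNIV. \<Sum>c\<in>UNIV. y$c$d * tau (a$i$c * st (a$j$d)))"
    by (simp add: tau_sum sc_right sc_left tau_sc)
  also have "\<dots> = (\<Sum>c\<in>UNIV. \<Sum>d\<in>UNIV. tau (a$i$c * st (a$j$d)) * y$c$d)"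
    by (subst sum.swap) (simp add: mult.commute)
  finally show ?thesis .
qed

lemma tr_expand: "(\<Sum>i\<in>UNIV. tau ((madj st b ** b) $ i $ i)) = (\<Sum>i\<in>UNIV. \<Sum>k\<in>UNIV. tau (st (b$k$i) * b$k$i))"
  unfolding madj_def matrix_matrix_mult_def by (simp add: tau_sum)

lemma tr_real: "(\<Sum>i\<in>UNIV. tau ((madj st b ** b) $ i $ i)) \<in> \<real>"
  unfolding tr_expand by (intro sum_in_Reals tau_real)

lemma norm2_eq: "complex_of_real (norm2_sq st tau (b::'b^'n^'n)) = (\<Sum>i\<in>UNIV. tau ((madj st b ** b) $ i $ i)) / of_nat CARD('n)"
proof -
  have "(\<Sum>i\<in>UNIV. tau ((madj st b ** b) $ i $ i)) / of_nat CARD('n) \<in> \<real>"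
    using tr_real[of b] by (simp add: Reals_divide)
  then show ?thesis unfolding norm2_sq_def by (rule of_real_Re)
qed

lemma S_plus: fixes a :: "'b^'n^'n"
  shows "(\<Sum>i\<in>UNIV. tau ((madj st (a + transpose a) ** (a + transpose a)) $ i $ i)) =
    2 * (\<Sum>i\<in>UNIV. \<Sum>k\<in>UNIV. tau (a$i$k * st (a$i$k))) + 2 * (\<Sum>i\<in>UNIV. \<Sum>k\<in>UNIV. tau (a$i$k * st (a$k$i)))"
proof -
  let ?f = "\<lambda>i k. tau (a$i$k * st (a$i$k))" and ?g = "\<lambda>i k. tau (a$i$k * st (a$k$i))"
  have t: "tau (st ((a + transpose a)$k$i) * (a + transpose a)$k$i) = ?f k i + ?f i k + ?g i k + ?g k i" for i k
  proof -
    have "st ((a + transpose a)$k$i) * (a + transpose a)$k$i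
       = st (a$k$i) * a$k$i + st (a$i$k) * a$i$k + st (a$k$i) * a$i$k + st (a$i$k) * a$k$i"
      by (simp add: transpose_def st_add algebra_simps)
    then show ?thesis by (simp add: tau_add tau_comm[of "st _"])
  qed
  have sw: "(\<Sum>i\<in>UNIV. \<Sum>k\<in>UNIV. h k i) = (\<Sum>i\<in>UNIV. \<Sum>k\<in>UNIV. h i k)" for h :: "'n \<Rightarrow> 'n \<Rightarrow> complex"
    by (rule sum.swap)
  show ?thesis unfolding tr_expand t
    by (simp add: sum.distrib sw[of ?f] sw[of ?g])
qed

lemma S_minus: fixes a :: "'b^'n^'n"
  shows "(\<Sum>i\<in>UNIV. tau ((madj st (a - transpose a) ** (a - transpose a)) $ i $ i)) =
    2 * (\<Sum>i\<in>UNIV. \<Sum>k\<in>UNIV. tau (a$i$k * st (a$i$k))) - 2 * (\<Sum>i\<in>UNIV. \<Sum>k\<in>UNIV. tau (a$i$k * st (a$k$i)))"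
proof -
  let ?f = "\<lambda>i k. tau (a$i$k * st (a$i$k))" and ?g = "\<lambda>i k. tau (a$i$k * st (a$k$i))"
  have t: "tau (st ((a - transpose a)$k$i) * (a - transpose a)$k$i) = ?f k i + ?f i k - ?g i k - ?g k i" for i k
  proof -
    have "st ((a - transpose a)$k$i) * (a - transpose a)$k$i
       = st (a$k$i) * a$k$i + st (a$i$k) * a$i$k - st (a$k$i) * a$i$k - st (a$i$k) * a$k$i"
      by (simp add: transpose_def st_diff algebra_simps)
    then show ?thesis by (simp add: tau_add tau_diff tau_comm[of "st _"])
  qed
  have sw: "(\<Sum>i\<in>UNIV. \<Sum>k\<in>UNIV. h k i) = (\<Sum>i\<in>UNIV. \<Sum>k\<in>UNIV. h i k)" for h :: "'n \<Rightarrow> 'n \<Rightarrow> complex"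
    by (rule sum.swap)
  show ?thesis unfolding tr_expand t
    by (simp add: sum.distrib sum_subtractf sw[of ?f] sw[of ?g])
qed

end

lemma coefA: fixes n P Q :: complex assumes a: "n \<noteq> 0" "n + 1 \<noteq> 0" "n - 1 \<noteq> 0"
  shows "(n*P - Q)/(n*(n^2-1)) = (2*P+2*Q)/n/4/(n+1) + (2*P-2*Q)/n/4/(n-1)"
proof -
  have f: "n*(n^2 - 1) = n*((n-1)*(n+1))" by (simp add: power2_eq_square algebra_simps)
  have num: "(2*P+2*Q)*(n-1) + (2*P-2*Q)*(n+1) = 4*(n*P - Q)" by (simp add: algebra_simps)
  have "(2*P+2*Q)/n/4/(n+1) + (2*P-2*Q)/n/4/(n-1) = ((2*P+2*Q)*(n-1) + (2*P-2*Q)*(n+1)) / (4*(n*((n-1)*(n+1))))"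
    using a by (simp add: add_divide_distrib divide_divide_eq_left) (simp add: field_simps)
  also have "\<dots> = (n*P - Q) / (n*((n-1)*(n+1)))"
    unfolding num by (rule mult_divide_mult_cancel_left) simp
  finally show ?thesis unfolding f by simp
qed
lemma coefB: fixes n P Q :: complex assumes a: "n \<noteq> 0" "n + 1 \<noteq> 0" "n - 1 \<noteq> 0"
  shows "(n*Q - P)/(n*(n^2-1)) = (2*P+2*Q)/n/4/(n+1) - (2*P-2*Q)/n/4/(n-1)"
proof -
  have f: "n*(n^2 - 1) = n*((n-1)*(n+1))" by (simp add: power2_eq_square algebra_simps)
  have num: "(2*P+2*Q)*(n-1) - (2*P-2*Q)*(n+1) = 4*(n*Q - P)" by (simp add: algebra_simps)
  have "(2*P+2*Q)/n/4/(n+1) - (2*P-2*Q)/n/4/(n-1) = ((2*P+2*Q)*(n-1) - (2*P-2*Q)*(n+1)) / (4*(n*((n-1)*(n+1))))"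
    using a by (simp add: diff_divide_distrib divide_divide_eq_left) (simp add: field_simps)
  also have "\<dots> = (n*Q - P) / (n*((n-1)*(n+1)))"
    unfolding num by (rule mult_divide_mult_cancel_left) simp
  finally show ?thesis unfolding f by simp
qed

theorem lemma5p5:
  fixes sc :: "complex \<Rightarrow> 'b::ring_1 \<Rightarrow> 'b" and st :: "'b \<Rightarrow> 'b" and tau :: "'b \<Rightarrow> complex"
    and a :: "'b^'n^'n" and \<mu> :: "(complex^'n^'n) measure"
  assumes "CARD('n) \<ge> 2"
    and "tracial_star_alg sc st tau"
    and "haar_unitary \<mu>"
  shows "twirl \<mu> (Tmap sc st tau a) =
    (\<lambda>x. (norm2_sq st tau (a + transpose a) / 4) *\<^sub>R W_plus x
        + (norm2_sq st tau (a - transpose a) / 4) *\<^sub>R W_minus x)"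
proof (rule ext)
  fix x :: "complex^'n^'n"
  note card = assms(1) and tsa = assms(2) and h = assms(3)
  define G where "G = (\<lambda>i j p q. tau (a$i$p * st (a$j$q)))"
  define P where "P = (\<Sum>i\<in>UNIV. \<Sum>k\<in>UNIV. tau (a$i$k * st (a$i$k)))"
  define Q where "Q = (\<Sum>i\<in>UNIV. \<Sum>k\<in>UNIV. tau (a$i$k * st (a$k$i)))"
  let ?n = "of_nat CARD('n) :: complex"
  have hT: "\<And>y i j. Tmap sc st tau a y $ i $ j = (\<Sum>c\<in>UNIV. \<Sum>d\<in>UNIV. G i j c d * y$c$d)"
    unfolding G_def by (rule Tmap_coef[OF tsa])
  have L1: "LL1 G = P" unfolding LL1_def G_def P_def ..
  have L2: "LL2 G = Q" unfolding LL2_def G_def Q_def ..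
  have np: "complex_of_real (norm2_sq st tau (a + transpose a)) = (2 * P + 2 * Q) / ?n"
    unfolding norm2_eq[OF tsa] S_plus[OF tsa] P_def Q_def ..
  have nm: "complex_of_real (norm2_sq st tau (a - transpose a)) = (2 * P - 2 * Q) / ?n"
    unfolding norm2_eq[OF tsa] S_minus[OF tsa] P_def Q_def ..
  have n0: "?n \<noteq> 0" using card by simp
  have n1: "?n + 1 \<noteq> 0"
  proof
    assume "?n + 1 = 0"
    then have "of_nat (CARD('n) + 1) = (0::complex)" by (simp add: add.commute)
    then show False by (simp only: of_nat_eq_0_iff)
  qed
  have n2: "?n - 1 \<noteq> 0"
  proof
    assume "?n - 1 = 0"
    then have "?n = of_nat 1" by simp
    then have "CARD('n) = 1" by (simp only: of_nat_eq_iff)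
    then show False using card by simp
  qed
  have cA: "(?n * P - Q) / (?n * (?n^2 - 1)) = (2 * P + 2 * Q) / ?n / 4 / (?n + 1) + (2 * P - 2 * Q) / ?n / 4 / (?n - 1)"
    by (rule coefA[OF n0 n1 n2])
  have cB: "(?n * Q - P) / (?n * (?n^2 - 1)) = (2 * P + 2 * Q) / ?n / 4 / (?n + 1) - (2 * P - 2 * Q) / ?n / 4 / (?n - 1)"
    by (rule coefB[OF n0 n1 n2])
  show "twirl \<mu> (Tmap sc st tau a) x = (norm2_sq st tau (a + transpose a) / 4) *\<^sub>R W_plus x
        + (norm2_sq st tau (a - transpose a) / 4) *\<^sub>R W_minus x"
  proof (simp only: vec_eq_iff, intro allI)
    fix i j
    have lhs: "twirl \<mu> (Tmap sc st tau a) x $ i $ j =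
      (?n * P - Q) / (?n * (?n^2 - 1)) * e i j * trace x + (?n * Q - P) / (?n * (?n^2 - 1)) * x$j$i"
      using twirl_form[OF h card hT] unfolding L1 L2 .
    define c1 where "c1 = (2 * P + 2 * Q) / ?n / 4 / (?n + 1)"
    define c2 where "c2 = (2 * P - 2 * Q) / ?n / 4 / (?n - 1)"
    have m: "mat (trace x) $ i $ j = e i j * trace x" by (simp add: mat_def e_def)
    have t: "transpose x $ i $ j = x $ j $ i" by (simp add: transpose_def)
    have r1: "(norm2_sq st tau (a + transpose a) / 4) *\<^sub>R ((1 / (real CARD('n) + 1)) *\<^sub>R z) = c1 * z" for z :: complex
      unfolding scaleR_conv_of_real of_real_divide np c1_def by simp
    have r2: "(norm2_sq st tau (a - transpose a) / 4) *\<^sub>R ((1 / (real CARD('n) - 1)) *\<^sub>R z) = c2 * z" for z :: complex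
      unfolding scaleR_conv_of_real of_real_divide nm c2_def by simp
    have rhs: "((norm2_sq st tau (a + transpose a) / 4) *\<^sub>R W_plus x
        + (norm2_sq st tau (a - transpose a) / 4) *\<^sub>R W_minus x) $ i $ j
      = c1 * (e i j * trace x + x$j$i) + c2 * (e i j * trace x - x$j$i)"
      unfolding W_plus_def W_minus_def
      by (simp only: vector_add_component vector_minus_component vector_scaleR_component m t r1 r2)
    have cA': "(?n * P - Q) / (?n * (?n^2 - 1)) = c1 + c2" unfolding c1_def c2_def by (rule cA)
    have cB': "(?n * Q - P) / (?n * (?n^2 - 1)) = c1 - c2" unfolding c1_def c2_def by (rule cB)
    show "twirl \<mu> (Tmap sc st tau a) x $ i $ j = ((norm2_sq st tau (a + transpose a) / 4) *\<^sub>R W_plus x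
        + (norm2_sq st tau (a - transpose a) / 4) *\<^sub>R W_minus x) $ i $ j"
      unfolding lhs rhs cA' cB' by (simp add: algebra_simps)
  qed
qed

end
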